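(* Let $H_k = F_k[2..f_k]$ for $k\ge 2$. Then (i) for every $k \geq 2$, both $H_k$ and $H_k\cdot a$ are Nyldon words; (ii) for every $k\geq 4$, the longest Nyldon proper suffix of $H_k$ is $H_{k-2}$, and the longest Nyldon proper suffix of $H_k\cdot a$ is $H_{k-2}\cdot a$.
   Context: Strings are over the binary alphabet $\{a,b\}$ ordered by $a \prec b$, and $\prec$ also denotes the induced lexicographic order on strings: $x \prec y$ iff $x$ is a proper prefix of $y$, or there is $i$ with $x[1..i-1]=y[1..i-1]$ and $x[i]\prec y[i]$; $x\preceq y$ means $x\prec y$ or $x=y$. For a string $w$, $w[i..j]$ denotes the substring from position $i$ to position $j$ (1-indexed). Nyldon words are defined recursively: every string of length $1$ is a Nyldon word; a string $w$ with $|w|\ge 2$ is a Nyldon word iff there is no factorization $w=\gamma_1\cdots\gamma_m$ with $m\ge 2$, each $\gamma_i$ a nonempty Nyldon word, and $\gamma_1\preceq\gamma_2\preceq\cdots\preceq\gamma_m$. A Nyldon proper suffix of $w$ is a proper suffix of $w$ that is a Nyldon word; the longest Nyldon proper suffix of $w$ is the longest such suffix. Fibonacci words: $F_0=b$, $F_1=a$, $F_k=F_{k-1}F_{k-2}$ for $k\ge 2$; $f_k=|F_k|$. *)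

theory Defs
  imports Main
begin

datatype letter = a | b

definition letter_less :: "letter \<Rightarrow> letter \<Rightarrow> bool" where
  "letter_less x y \<longleftrightarrow> x = a \<and> y = b"

definition lex_less :: "letter list \<Rightarrow> letter list \<Rightarrow> bool" where
  "lex_less x y \<longleftrightarrow>
     (\<exists>u. u \<noteq> [] \<and> y = x @ u) \<or>
     (\<exists>p c d s t. x = p @ [c] @ s \<and> y = p @ [d] @ t \<and> letter_less c d)"

definition lex_le :: "letter list \<Rightarrow> letter list \<Rightarrow> bool" where
  "lex_le x y \<longleftrightarrow> lex_less x y \<or> x = y"

lemmas [fundef_cong] = conj_cong

function nyldon :: "letter list \<Rightarrow> bool" where
  "nyldon w \<longleftrightarrow>
     length w = 1 \<or>
     (length w \<ge> 2 \<and>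
      \<not> (\<exists>gs. length gs \<ge> 2 \<and> concat gs = w \<and>
             (\<forall>i < length gs - 1. lex_le (gs ! i) (gs ! Suc i)) \<and>
             (\<forall>g \<in> set gs. g \<noteq> []) \<and>
             (\<forall>g \<in> set gs. nyldon g)))"
  by auto
termination
proof (relation "measure length", goal_cases)
  case 1 then show ?case by simp
next
  case (2 w gs g)
  then have g: "g \<in> set gs" and ne: "\<forall>h\<in>set gs. h \<noteq> []"
    and l: "2 \<le> length gs" and c: "concat gs = w" by auto
  have len: "length w = length g + sum_list (map length (remove1 g gs))"
    unfolding c[symmetric] length_concat by (rule sum_list_map_remove1[OF g])
  have "remove1 g gs \<noteq> []"
  proof
    assume "remove1 g gs = []"
    then have "length (remove1 g gs) = 0" by simp
    with g l show False by (simp add: length_remove1)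
  qed
  then obtain h where h: "h \<in> set (remove1 g gs)"
    by (cases "remove1 g gs") auto
  then have "h \<in> set gs" by (meson set_remove1_subset subsetD)
  with ne have "length h > 0" by auto
  moreover have "length h \<le> sum_list (map length (remove1 g gs))"
    using h by (simp add: member_le_sum_list)
  ultimately show ?case using len by (simp del: length_greater_0_conv)
qed

fun fibw :: "nat \<Rightarrow> letter list" where
  "fibw 0 = [b]"
| "fibw (Suc 0) = [a]"
| "fibw (Suc (Suc k)) = fibw (Suc k) @ fibw k"

definition H :: "nat \<Rightarrow> letter list" where
  "H k = drop 1 (fibw k)"

definition proper_suffix :: "letter list \<Rightarrow> letter list \<Rightarrow> bool" where
  "proper_suffix s w \<longleftrightarrow> (\<exists>u. u \<noteq> [] \<and> w = u @ s)"

definition is_longest_nyldon_proper_suffix :: "letter list \<Rightarrow> letter list \<Rightarrow> bool" where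
  "is_longest_nyldon_proper_suffix s w \<longleftrightarrow>
     proper_suffix s w \<and> nyldon s \<and>
     (\<forall>t. proper_suffix t w \<and> nyldon t \<longrightarrow> length t \<le> length s)"

end

theory Submission
  imports Defs
begin

declare nyldon.simps[simp del]

fun lt :: "letter list \<Rightarrow> letter list \<Rightarrow> bool" where
  "lt [] ys = (ys \<noteq> [])"
| "lt (x#xs) [] = False"
| "lt (x#xs) (y#ys) = (letter_less x y \<or> (x = y \<and> lt xs ys))"

lemma lt_prefix: "u \<noteq> [] \<Longrightarrow> lt x (x @ u)"
  by (induction x) auto

lemma lt_diff: "letter_less c d \<Longrightarrow> lt (p @ [c] @ s) (p @ [d] @ t)"
  by (induction p) auto

lemma lt_lex_less: "lt x y \<Longrightarrow> lex_less x y"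
proof (induction x y rule: lt.induct)
  case (1 ys)
  then show ?case unfolding lex_less_def by auto
next
  case (2 x xs)
  then show ?case by simp
next
  case (3 x xs y ys)
  show ?case
  proof (cases "letter_less x y")
    case True
    then show ?thesis unfolding lex_less_def
      by (intro disjI2 exI[of _ "[]"] exI[of _ x] exI[of _ y] exI[of _ xs] exI[of _ ys]) simp
  next
    case False
    with 3 have e: "x = y" and l: "lex_less xs ys" by auto
    from l show ?thesis unfolding lex_less_def
    proof (elim disjE exE conjE)
      fix u assume "u \<noteq> []" "ys = xs @ u"
      then show "(\<exists>u. u \<noteq> [] \<and> y # ys = (x # xs) @ u) \<or>
        (\<exists>p c d s t. x # xs = p @ [c] @ s \<and> y # ys = p @ [d] @ t \<and> letter_less c d)"
        using e by auto
    next
      fix p c d s t assume "xs = p @ [c] @ s" "ys = p @ [d] @ t" "letter_less c d"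
      then show "(\<exists>u. u \<noteq> [] \<and> y # ys = (x # xs) @ u) \<or>
        (\<exists>p c d s t. x # xs = p @ [c] @ s \<and> y # ys = p @ [d] @ t \<and> letter_less c d)"
        using e by (intro disjI2 exI[of _ "x # p"] exI[of _ c] exI[of _ d] exI[of _ s] exI[of _ t]) simp
    qed
  qed
qed

lemma lex_less_imp_lt: "lex_less x y \<Longrightarrow> lt x y"
  unfolding lex_less_def
proof (elim disjE exE conjE)
  fix u assume "u \<noteq> []" "y = x @ u"
  then show "lt x y" using lt_prefix by simp
next
  fix p c d s t assume "x = p @ [c] @ s" "y = p @ [d] @ t" "letter_less c d"
  then show "lt x y" using lt_diff by simp
qed

lemma lex_less_lt: "lex_less x y = lt x y"
  using lt_lex_less lex_less_imp_lt by blast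

lemma lex_le_lt: "lex_le x y = (lt x y \<or> x = y)"
  by (simp add: lex_le_def lex_less_lt)

lemma lt_irrefl: "\<not> lt x x"
  by (induction x) (auto simp: letter_less_def)

lemma lt_trans: "lt x y \<Longrightarrow> lt y z \<Longrightarrow> lt x z"
proof (induction x arbitrary: y z)
  case Nil
  then show ?case by (cases y; cases z) auto
next
  case (Cons c xs)
  then show ?case
    by (cases y; cases z) (auto simp: letter_less_def)
qed

lemma lt_total: "x \<noteq> y \<Longrightarrow> lt x y \<or> lt y x"
proof (induction x arbitrary: y)
  case Nil
  then show ?case by (cases y) auto
next
  case (Cons c xs)
  then show ?case
  proof (cases y)
    case (Cons d ys)
    then show ?thesis using Cons.IH Cons.prems
      by (cases c; cases d) (auto simp: letter_less_def)
  qed simp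
qed

lemma lt_asym: "lt x y \<Longrightarrow> \<not> lt y x"
  using lt_trans lt_irrefl by blast

lemma lt_append: "lt x y \<Longrightarrow> lt x (y @ z)"
proof (induction x y rule: lt.induct)
  case (1 ys)
  then show ?case by simp
next
  case (2 x xs)
  then show ?case by simp
next
  case (3 x xs y ys)
  then show ?case by auto
qed

lemma lle_trans: "lex_le x y \<Longrightarrow> lex_le y z \<Longrightarrow> lex_le x z"
  unfolding lex_le_lt using lt_trans by blast

lemma transp_le: "transp lex_le"
  using lle_trans by (auto intro: transpI)

lemma le_lt_trans: "lex_le x y \<Longrightarrow> lt y z \<Longrightarrow> lt x z"
  unfolding lex_le_lt using lt_trans by blast

lemma lt_le_trans: "lt x y \<Longrightarrow> lex_le y z \<Longrightarrow> lt x z"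
  unfolding lex_le_lt using lt_trans by blast

lemma not_lle: "\<not> lex_le x y \<Longrightarrow> lt y x"
  unfolding lex_le_lt using lt_total by blast

lemma prefix_le: "lex_le x (x @ u)"
  unfolding lex_le_lt using lt_prefix by (cases u) auto

lemma nyldon_iff: "nyldon w \<longleftrightarrow> length w = 1 \<or> (length w \<ge> 2 \<and>
   \<not> (\<exists>gs. length gs \<ge> 2 \<and> concat gs = w \<and> sorted_wrt lex_le gs \<and> (\<forall>g\<in>set gs. nyldon g)))"
proof -
  have ne: "nyldon g \<Longrightarrow> g \<noteq> []" for g
    by (subst (asm) nyldon.simps) auto
  have s: "(\<forall>i < length gs - 1. lex_le (gs ! i) (gs ! Suc i)) \<longleftrightarrow> sorted_wrt lex_le gs" for gs
    unfolding sorted_wrt_iff_nth_Suc_transp[OF transp_le] by auto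
  show ?thesis
    apply (subst nyldon.simps)
    using ne s by blast
qed

lemma nyldon_ne: "nyldon w \<Longrightarrow> w \<noteq> []"
  by (subst (asm) nyldon_iff) auto

definition fac :: "letter list \<Rightarrow> letter list list \<Rightarrow> bool" where
  "fac w ns \<longleftrightarrow> ns \<noteq> [] \<and> concat ns = w \<and> sorted_wrt lex_le ns \<and> (\<forall>g\<in>set ns. nyldon g)"


lemma fac_exists: "w \<noteq> [] \<Longrightarrow> \<exists>ns. fac w ns"
proof (cases "nyldon w")
  case True
  then show ?thesis by (intro exI[of _ "[w]"]) (simp add: fac_def)
next
  case False
  assume ne: "w \<noteq> []"
  from False nyldon_iff[of w] have A: "length w \<noteq> 1" and
    B: "length w \<ge> 2 \<longrightarrow> (\<exists>gs. length gs \<ge> 2 \<and> concat gs = w \<and> sorted_wrt lex_le gs \<and>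
      (\<forall>g\<in>set gs. nyldon g))"
    by blast+
  have "length w \<noteq> 0" using ne by simp
  with A have "length w \<ge> 2" by arith
  then obtain gs where "length gs \<ge> 2" "concat gs = w" "sorted_wrt lex_le gs"
      "\<forall>g\<in>set gs. nyldon g"
    using B by blast
  then show ?thesis unfolding fac_def by (intro exI[of _ gs]) auto
qed

lemma fac_nonempty: "fac w ns \<Longrightarrow> g \<in> set ns \<Longrightarrow> g \<noteq> []"
  unfolding fac_def using nyldon_ne by blast

lemma not_nyldon_fac: assumes "fac w ns" "length ns \<ge> 2" shows "\<not> nyldon w"
proof -
  obtain x y r where ns: "ns = x # y # r" using assms(2)
    by (metis One_nat_def Suc_1 Suc_le_length_iff le_SucE not_less_eq_eq numeral_2_eq_2)
  have "x \<noteq> []" "y \<noteq> []" using fac_nonempty[OF assms(1)] ns by auto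
  then have "length w \<ge> 2" using assms(1) ns unfolding fac_def
    by (cases x; cases y) auto
  then show ?thesis using assms unfolding fac_def
    by (subst nyldon_iff) auto
qed

lemma nyldon_fac_single: assumes "nyldon w" "fac w ns" shows "ns = [w]"
proof -
  have "length ns < 2" using not_nyldon_fac assms by fastforce
  moreover have "ns \<noteq> []" using assms unfolding fac_def by auto
  ultimately obtain g where "ns = [g]"
    by (metis One_nat_def length_0_conv length_Suc_conv less_2_cases)
  then show ?thesis using assms unfolding fac_def by auto
qed

lemma sorted_last: "sorted_wrt lex_le (xs @ [l]) \<Longrightarrow> p \<in> set (xs @ [l]) \<Longrightarrow> lex_le p l"
  by (auto simp: sorted_wrt_append lex_le_def)

lemma fac_butlast: assumes "fac w (xs @ [l])" "xs \<noteq> []"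
  shows "fac (concat xs) xs" "w = concat xs @ l" "concat xs \<noteq> []" "nyldon l"
proof -
  show "fac (concat xs) xs" using assms unfolding fac_def by (auto simp: sorted_wrt_append)
  show "w = concat xs @ l" using assms unfolding fac_def by auto
  obtain g where "g \<in> set xs" using assms(2) by (cases xs) auto
  then have "g \<noteq> []" using fac_nonempty[OF assms(1)] by auto
  then show "concat xs \<noteq> []" using \<open>g \<in> set xs\<close> by auto
  show "nyldon l" using assms unfolding fac_def by auto
qed

lemma suffix_cases: "u1 @ s1 = u2 @ s2 \<Longrightarrow> length s1 \<le> length s2 \<Longrightarrow> \<exists>v. s2 = v @ s1"
  by (auto simp: append_eq_append_conv2)

lemma suffix_concat_split:
  "concat ns = u @ s \<Longrightarrow> s \<noteq> [] \<Longrightarrow>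
   \<exists>as n cs x y. ns = as @ [n] @ cs \<and> n = y @ x \<and> x \<noteq> [] \<and> s = x @ concat cs"
proof (induction ns arbitrary: u)
  case Nil
  then show ?case by simp
next
  case (Cons m ms)
  then have "m @ concat ms = u @ s" by simp
  then obtain us where "(m = u @ us \<and> us @ concat ms = s) \<or> (m @ us = u \<and> concat ms = us @ s)"
    by (auto simp: append_eq_append_conv2)
  then show ?case
  proof
    assume h: "m = u @ us \<and> us @ concat ms = s"
    show ?thesis
    proof (cases "us = []")
      case True
      then have "concat ms = [] @ s" using h by simp
      from Cons.IH[OF this Cons.prems(2)] obtain as n cs x y where
        "ms = as @ [n] @ cs \<and> n = y @ x \<and> x \<noteq> [] \<and> s = x @ concat cs" by blast
      then show ?thesis by (intro exI[of _ "m # as"]) auto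
    next
      case False
      then show ?thesis using h
        by (intro exI[of _ "[]"] exI[of _ m] exI[of _ ms] exI[of _ us] exI[of _ u]) auto
    qed
  next
    assume h: "m @ us = u \<and> concat ms = us @ s"
    from Cons.IH[OF conjunct2[OF h] Cons.prems(2)] obtain as n cs x y where
      "ms = as @ [n] @ cs \<and> n = y @ x \<and> x \<noteq> [] \<and> s = x @ concat cs" by blast
    then show ?thesis by (intro exI[of _ "m # as"]) auto
  qed
qed

definition LP :: "letter list \<Rightarrow> bool" where
  "LP w \<longleftrightarrow> (\<forall>ns t u. fac w ns \<longrightarrow> nyldon t \<longrightarrow> w = u @ t \<longrightarrow> length t \<le> length (last ns))"

definition BP :: "letter list \<Rightarrow> bool" where
  "BP w \<longleftrightarrow> (\<forall>m. nyldon w \<longrightarrow> proper_suffix m w \<longrightarrow> nyldon m \<longrightarrow> lt m w)"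

lemma L_step: assumes IH: "\<And>v. length v < length w \<Longrightarrow> BP v" shows "LP w"
  unfolding LP_def
proof (intro allI impI)
  fix ns t u assume f: "fac w ns" and nt: "nyldon t" and wu: "w = u @ t"
  show "length t \<le> length (last ns)"
  proof (rule ccontr)
    assume long: "\<not> length t \<le> length (last ns)"
    have "t \<noteq> []" using nt nyldon_ne by blast
    moreover have "concat ns = u @ t" using f wu unfolding fac_def by simp
    ultimately obtain as n cs x y where sp: "ns = as @ [n] @ cs" "n = y @ x" "x \<noteq> []"
      "t = x @ concat cs" using suffix_concat_split by blast
    have csne: "cs \<noteq> []"
    proof
      assume c0: "cs = []"
      have "last ns = n" using sp c0 by simp
      moreover have "t = x" using sp c0 by simp
      ultimately show False using long sp(2) by simp
    qed
    have srt: "sorted_wrt lex_le (n # cs)" using f sp unfolding fac_def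
      by (simp add: sorted_wrt_append)
    have nyn: "\<forall>g\<in>set (n # cs). nyldon g" using f sp unfolding fac_def by auto
    show False
    proof (cases "y = []")
      case True
      then have "fac t (n # cs)" using srt nyn sp unfolding fac_def by auto
      moreover have "length (n # cs) \<ge> 2" using csne by (cases cs) auto
      ultimately show False using not_nyldon_fac nt by blast
    next
      case False
      obtain ms where fx: "fac x ms" using fac_exists sp(3) by blast
      then obtain ms' mj where msd: "ms = ms' @ [mj]" unfolding fac_def
        by (metis rev_exhaust)
      have xd: "x = concat ms' @ mj" using fx msd unfolding fac_def by simp
      have nmj: "nyldon mj" using fx msd unfolding fac_def by simp
      have ps: "proper_suffix mj n" unfolding proper_suffix_def
        using sp(2) xd False by (intro exI[of _ "y @ concat ms'"]) auto
      obtain c where "c \<in> set cs" using csne by (cases cs) auto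
      then have "c \<noteq> []" using fac_nonempty[OF f] sp by auto
      then have "concat cs \<noteq> []" using \<open>c \<in> set cs\<close> by auto
      then have "length (concat cs) > 0" by simp
      moreover have "length w = length (concat as) + length n + length (concat cs)"
        using f sp unfolding fac_def by auto
      ultimately have "length n < length w" by arith
      then have "BP n" using IH by blast
      then have ltn: "lt mj n" using ps nmj nyn unfolding BP_def by auto
      have "fac t (ms @ cs)" unfolding fac_def
      proof (intro conjI)
        show "ms @ cs \<noteq> []" using msd by simp
        show "concat (ms @ cs) = t" using fx sp unfolding fac_def by simp
        show "\<forall>g\<in>set (ms @ cs). nyldon g" using fx nyn unfolding fac_def by auto
        have "lex_le p c" if "p \<in> set ms" "c \<in> set cs" for p c
        proof -
          have "lex_le p mj" using sorted_last[of ms' mj p] fx msd that unfolding fac_def by simp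
          moreover have "lex_le n c" using srt that by simp
          ultimately show ?thesis using ltn le_lt_trans lt_le_trans lex_le_lt by blast
        qed
        then show "sorted_wrt lex_le (ms @ cs)" using fx srt unfolding fac_def
          by (auto simp: sorted_wrt_append)
      qed
      moreover have "length (ms @ cs) \<ge> 2" using csne msd by (cases cs) auto
      ultimately show False using not_nyldon_fac nt by blast
    qed
  qed
qed

lemma exists_longest: assumes "proper_suffix m w" "nyldon m"
  shows "\<exists>s. is_longest_nyldon_proper_suffix s w"
proof -
  let ?S = "{t. proper_suffix t w \<and> nyldon t}"
  have "?S \<subseteq> (\<lambda>k. drop k w) ` {..length w}"
  proof
    fix t assume "t \<in> ?S"
    then obtain u where "w = u @ t" unfolding proper_suffix_def by auto
    then show "t \<in> (\<lambda>k. drop k w) ` {..length w}" by (intro image_eqI[of _ _ "length u"]) auto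
  qed
  then have fin: "finite ?S" by (rule finite_subset) auto
  have "m \<in> ?S" using assms by auto
  then have ne: "length ` ?S \<noteq> {}" by blast
  have "Max (length ` ?S) \<in> length ` ?S" using fin ne by (intro Max_in) auto
  then obtain s where s: "s \<in> ?S" "length s = Max (length ` ?S)" by auto
  have "\<forall>t. proper_suffix t w \<and> nyldon t \<longrightarrow> length t \<le> length s"
    using s fin by (auto intro: Max_ge)
  then show ?thesis using s unfolding is_longest_nyldon_proper_suffix_def by auto
qed


lemma B_step: assumes IH: "\<And>v. length v < length w \<Longrightarrow> LP v \<and> BP v" shows "BP w"
  unfolding BP_def
proof (intro allI impI)
  fix m assume nw: "nyldon w" and pm: "proper_suffix m w" and nm: "nyldon m"
  obtain s where sl: "is_longest_nyldon_proper_suffix s w" using exists_longest pm nm by blast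
  then obtain u where wus: "w = u @ s" "u \<noteq> []" and ns: "nyldon s"
    and lng: "\<And>t. proper_suffix t w \<Longrightarrow> nyldon t \<Longrightarrow> length t \<le> length s"
    unfolding is_longest_nyldon_proper_suffix_def proper_suffix_def by blast
  obtain ps where fu: "fac u ps" using fac_exists wus by blast
  then obtain ps' pr where psd: "ps = ps' @ [pr]" unfolding fac_def by (metis rev_exhaust)
  have ps'e: "ps' = []"
  proof (rule ccontr)
    assume ne: "ps' \<noteq> []"
    note fb = fac_butlast[OF fu[unfolded psd] ne]
    define z where "z = pr @ s"
    have wz: "w = concat ps' @ z" using wus fb z_def by simp
    have "length z < length w" using wz fb(3) by (cases "concat ps'") auto
    then have LPz: "LP z" using IH by blast
    have "z \<noteq> []" using ns nyldon_ne z_def by simp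
    then obtain zs where fz: "fac z zs" using fac_exists by blast
    then obtain zs' zl where zsd: "zs = zs' @ [zl]" unfolding fac_def by (metis rev_exhaust)
    have zz: "z = concat zs' @ zl" using fz zsd unfolding fac_def by simp
    have "length s \<le> length zl" using LPz fz ns zsd unfolding LP_def z_def
      by (metis last_snoc)
    moreover have "length zl \<le> length s"
    proof (rule lng)
      show "nyldon zl" using fz zsd unfolding fac_def by simp
      show "proper_suffix zl w" unfolding proper_suffix_def using wz zz fb(3)
        by (intro exI[of _ "concat ps' @ concat zs'"]) auto
    qed
    ultimately have eq: "zl = s" "concat zs' = pr" using zz z_def
      by (auto simp: append_eq_append_conv)
    have "pr \<noteq> []" using fu psd fac_nonempty by auto
    then have zs'ne: "zs' \<noteq> []" using eq by auto
    have "nyldon pr" using fu psd unfolding fac_def by simp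
    then have "zs' = [pr]" using nyldon_fac_single fac_butlast(1)[OF fz[unfolded zsd] zs'ne] eq
      by simp
    then have prs: "lex_le pr s" using fz zsd eq unfolding fac_def by simp
    have "fac w (ps @ [s])" unfolding fac_def
    proof (intro conjI)
      show "ps @ [s] \<noteq> []" by simp
      show "concat (ps @ [s]) = w" using fu wus unfolding fac_def by simp
      show "\<forall>g\<in>set (ps @ [s]). nyldon g" using fu ns unfolding fac_def by auto
      have "lex_le p s" if "p \<in> set ps" for p
        using sorted_last[of ps' pr p] fu psd that prs lle_trans unfolding fac_def by blast
      then show "sorted_wrt lex_le (ps @ [s])" using fu unfolding fac_def
        by (auto simp: sorted_wrt_append)
    qed
    moreover have "length (ps @ [s]) \<ge> 2" using psd ne by (cases ps') auto
    ultimately show False using not_nyldon_fac nw by blast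
  qed
  then have "u = pr" using fu psd unfolding fac_def by simp
  have "nyldon pr" using fu psd unfolding fac_def by simp
  then have "nyldon u" using \<open>u = pr\<close> by simp
  have "\<not> lex_le u s"
  proof
    assume "lex_le u s"
    then have "fac w [u, s]" using \<open>nyldon u\<close> ns wus unfolding fac_def by simp
    then show False using not_nyldon_fac nw by fastforce
  qed
  then have "lt s u" by (rule not_lle)
  then have lsw: "lt s w" using wus lt_append by simp
  obtain u0 where wu0: "w = u0 @ m" using pm unfolding proper_suffix_def by blast
  have "length m \<le> length s" using lng pm nm by blast
  then obtain v where sv: "s = v @ m" using suffix_cases[of u0 m u s] wu0 wus by auto
  show "lt m w"
  proof (cases "v = []")
    case True
    then show ?thesis using sv lsw by simp
  next
    case False
    have "length s < length w" using wus by (cases u) auto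
    then have "BP s" using IH by blast
    then have "lt m s" using ns nm False sv unfolding BP_def proper_suffix_def by blast
    then show ?thesis using lsw lt_trans by blast
  qed
qed

lemma LB: "LP w \<and> BP w"
proof (induction w rule: length_induct)
  case (1 w)
  then show ?case using L_step B_step by blast
qed

lemma L_thm: "fac w ns \<Longrightarrow> nyldon t \<Longrightarrow> w = u @ t \<Longrightarrow> length t \<le> length (last ns)"
  using LB unfolding LP_def by blast

lemma B_thm: "nyldon w \<Longrightarrow> proper_suffix m w \<Longrightarrow> nyldon m \<Longrightarrow> lt m w"
  using LB unfolding BP_def by blast


lemma hall:
  assumes np: "nyldon p" and nq: "nyldon q" and qp: "lt q p"
    and hc: "length p = 1 \<or> (\<exists>p''. is_longest_nyldon_proper_suffix p'' p \<and> lex_le p'' q)"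
  shows "nyldon (p @ q) \<and> is_longest_nyldon_proper_suffix q (p @ q)"
proof -
  have step1: "length t \<le> length q" if pt: "proper_suffix t (p @ q)" and nt: "nyldon t" for t
  proof (rule ccontr)
    assume long: "\<not> length t \<le> length q"
    obtain v where v: "p @ q = v @ t" "v \<noteq> []" using pt unfolding proper_suffix_def by blast
    then obtain x where px: "p = v @ x" and tx: "t = x @ q" using long
      by (auto simp: append_eq_append_conv2)
    have xne: "x \<noteq> []" using tx long by auto
    then have "length p \<noteq> 1" using px v(2) by (cases v; cases x) auto
    then obtain p'' where pl: "is_longest_nyldon_proper_suffix p'' p" and pq: "lex_le p'' q"
      using hc by blast
    obtain ms where fx: "fac x ms" using fac_exists xne by blast
    then obtain ms' mj where msd: "ms = ms' @ [mj]" unfolding fac_def by (metis rev_exhaust)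
    have xd: "x = concat ms' @ mj" using fx msd unfolding fac_def by simp
    have nmj: "nyldon mj" using fx msd unfolding fac_def by simp
    have psm: "proper_suffix mj p" unfolding proper_suffix_def using px xd v(2)
      by (intro exI[of _ "v @ concat ms'"]) auto
    then have "length mj \<le> length p''" using pl nmj
      unfolding is_longest_nyldon_proper_suffix_def by blast
    moreover obtain u1 where "p = u1 @ p''" using pl
      unfolding is_longest_nyldon_proper_suffix_def proper_suffix_def by blast
    moreover obtain u2 where "p = u2 @ mj" using psm unfolding proper_suffix_def by blast
    ultimately obtain y where pmj: "p'' = y @ mj" using suffix_cases by metis
    have "lex_le mj p''"
    proof (cases "y = []")
      case True then show ?thesis using pmj by (simp add: lex_le_lt)
    next
      case False
      then have "lt mj p''" using B_thm[of p'' mj] pl nmj pmj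
        unfolding is_longest_nyldon_proper_suffix_def proper_suffix_def by blast
      then show ?thesis by (simp add: lex_le_lt)
    qed
    then have mjq: "lex_le mj q" using pq lle_trans by blast
    have "fac t (ms @ [q])" unfolding fac_def
    proof (intro conjI)
      show "ms @ [q] \<noteq> []" by simp
      show "concat (ms @ [q]) = t" using fx tx unfolding fac_def by simp
      show "\<forall>g\<in>set (ms @ [q]). nyldon g" using fx nq unfolding fac_def by auto
      have "lex_le m' q" if "m' \<in> set ms" for m'
        using sorted_last[of ms' mj m'] fx msd that mjq lle_trans unfolding fac_def by blast
      then show "sorted_wrt lex_le (ms @ [q])" using fx unfolding fac_def
        by (auto simp: sorted_wrt_append)
    qed
    moreover have "length (ms @ [q]) \<ge> 2" using msd by simp
    ultimately show False using not_nyldon_fac nt by blast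
  qed
  have pne: "p \<noteq> []" using np nyldon_ne by blast
  have nw: "nyldon (p @ q)"
  proof (rule ccontr)
    assume nn: "\<not> nyldon (p @ q)"
    obtain ns where fw: "fac (p @ q) ns" using fac_exists pne by blast
    then obtain ns' l where nsd: "ns = ns' @ [l]" unfolding fac_def by (metis rev_exhaust)
    have ns'ne: "ns' \<noteq> []"
    proof
      assume "ns' = []"
      then have "l = p @ q" "nyldon l" using fw nsd unfolding fac_def by auto
      then show False using nn by simp
    qed
    note fb = fac_butlast[OF fw[unfolded nsd] ns'ne]
    have "length q \<le> length l" using L_thm[OF fw nq, of p] nsd by simp
    moreover have "length l \<le> length q"
      using step1[of l] fb unfolding proper_suffix_def by blast
    ultimately have eq: "l = q" "concat ns' = p" using fb(2)
      by (auto simp: append_eq_append_conv)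
    then have "ns' = [p]" using nyldon_fac_single[OF np] fb(1) by simp
    then have "lex_le p q" using fw nsd eq unfolding fac_def by simp
    then show False using qp lt_asym lt_irrefl unfolding lex_le_lt by blast
  qed
  moreover have "is_longest_nyldon_proper_suffix q (p @ q)"
    unfolding is_longest_nyldon_proper_suffix_def proper_suffix_def
    using nq pne step1 unfolding proper_suffix_def by blast
  ultimately show ?thesis by blast
qed

lemma fib_hd: "\<exists>r. fibw (Suc k) = a # r"
proof (induction k)
  case 0
  then show ?case by simp
next
  case (Suc k)
  then obtain r where "fibw (Suc k) = a # r" by blast
  then show ?case by simp
qed

lemma fib_a: "fibw (Suc k) = a # H (Suc k)"
  using fib_hd[of k] by (auto simp: H_def)

lemma H_rec: "H (Suc (Suc (Suc j))) = H (Suc (Suc j)) @ [a] @ H (Suc j)"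
proof -
  have "H (Suc (Suc (Suc j))) = drop 1 (fibw (Suc (Suc j)) @ fibw (Suc j))" by (simp add: H_def)
  also have "\<dots> = H (Suc (Suc j)) @ fibw (Suc j)"
    using fib_a[of "Suc j"] by (simp add: H_def)
  also have "\<dots> = H (Suc (Suc j)) @ [a] @ H (Suc j)" using fib_a[of j] by simp
  finally show ?thesis .
qed

lemma H2: "H 2 = [b]" by (simp add: H_def numeral_2_eq_2)
lemma H3: "H 3 = [b, a]" by (simp add: H_def numeral_3_eq_3)

lemma ny1: "length w = 1 \<Longrightarrow> nyldon w" by (subst nyldon_iff) simp

lemma base: "nyldon [b, a] \<and> is_longest_nyldon_proper_suffix [a] [b, a]"
  using hall[of "[b]" "[a]"] ny1 by (simp add: letter_less_def)

lemma base2: "nyldon [b, a, a] \<and> is_longest_nyldon_proper_suffix [a] [b, a, a]"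
proof -
  have h: "length [b, a] = 1 \<or> (\<exists>p''. is_longest_nyldon_proper_suffix p'' [b, a] \<and> lex_le p'' [a])"
    using base by (intro disjI2 exI[of _ "[a]"]) (simp add: lex_le_lt)
  have "lt [a] [b, a]" by (simp add: letter_less_def)
  then show ?thesis using hall[OF conjunct1[OF base] ny1[of "[a]"] _ h] by simp
qed

lemma main: "k \<ge> 2 \<Longrightarrow> nyldon (H k) \<and> nyldon (H k @ [a]) \<and>
   (k \<ge> 3 \<longrightarrow> (\<exists>p''. is_longest_nyldon_proper_suffix p'' (H k @ [a]) \<and> lex_le p'' (H (k - 1)))) \<and>
   (k \<ge> 4 \<longrightarrow> is_longest_nyldon_proper_suffix (H (k - 2)) (H k) \<and>
              is_longest_nyldon_proper_suffix (H (k - 2) @ [a]) (H k @ [a]))"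
proof (induction k rule: less_induct)
  case (less k)
  consider "k = 2" | "k = 3" | i where "k = Suc (Suc (Suc (Suc i)))"
    using less.prems by (metis Suc_le_length_iff add_2_eq_Suc le_Suc_eq le_add_diff_inverse
        numeral_2_eq_2 numeral_3_eq_3 not_less_eq_eq)
  then show ?case
  proof cases
    case 1
    then show ?thesis using H2 ny1 base by simp
  next
    case 2
    have "H (3 - 1) = [b]" using H2 by simp
    then show ?thesis using 2 H3 base base2
      by (auto simp: lex_le_lt letter_less_def intro!: exI[of _ "[a]"])
  next
    case 3
    have IH1: "nyldon (H (Suc (Suc (Suc i))) @ [a]) \<and>
       (\<exists>p''. is_longest_nyldon_proper_suffix p'' (H (Suc (Suc (Suc i))) @ [a]) \<and>
          lex_le p'' (H (Suc (Suc i))))"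
      using less.IH[of "Suc (Suc (Suc i))"] 3 by simp
    have IH2: "nyldon (H (Suc (Suc i))) \<and> nyldon (H (Suc (Suc i)) @ [a])"
      using less.IH[of "Suc (Suc i)"] 3 by simp
    define P where "P = H (Suc (Suc (Suc i))) @ [a]"
    have Pd: "P = H (Suc (Suc i)) @ ([a] @ H (Suc i) @ [a])" using H_rec P_def by simp
    have Pd2: "P = (H (Suc (Suc i)) @ [a]) @ (H (Suc i) @ [a])" using Pd by simp
    have lenP: "length P \<noteq> 1" using Pd by simp
    obtain p'' where pl: "is_longest_nyldon_proper_suffix p'' P" and pq: "lex_le p'' (H (Suc (Suc i)))"
      using IH1 P_def by blast
    have h1: "nyldon (P @ H (Suc (Suc i))) \<and> is_longest_nyldon_proper_suffix (H (Suc (Suc i))) (P @ H (Suc (Suc i)))"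
      apply (rule hall)
      using IH1 IH2 P_def apply simp
      using IH2 apply simp
      using Pd lt_prefix apply (metis append_is_Nil_conv not_Cons_self2)
      using pl pq by blast
    have h2: "nyldon (P @ H (Suc (Suc i)) @ [a]) \<and> is_longest_nyldon_proper_suffix (H (Suc (Suc i)) @ [a]) (P @ H (Suc (Suc i)) @ [a])"
      apply (rule hall)
      using IH1 IH2 P_def apply simp
      using IH2 apply simp
      using Pd2 lt_prefix apply (metis append_is_Nil_conv not_Cons_self2)
      using pl pq prefix_le lle_trans by blast
    have Hk: "H k = P @ H (Suc (Suc i))" using 3 H_rec P_def by simp
    have le3: "lex_le (H (Suc (Suc i)) @ [a]) (H (k - 1))"
      using 3 H_rec[of i] prefix_le by (metis append_assoc diff_Suc_1)
    show ?thesis using h1 h2 Hk le3 3 by auto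
  qed
qed

theorem lemma3:
  shows "(\<forall>k\<ge>2. nyldon (H k) \<and> nyldon (H k @ [a])) \<and>
         (\<forall>k\<ge>4. is_longest_nyldon_proper_suffix (H (k - 2)) (H k) \<and>
                 is_longest_nyldon_proper_suffix (H (k - 2) @ [a]) (H k @ [a]))"
proof (intro conjI allI impI)
  fix k :: nat assume "k \<ge> 2" then show "nyldon (H k)" using main by blast
next
  fix k :: nat assume "k \<ge> 2" then show "nyldon (H k @ [a])" using main by blast
next
  fix k :: nat assume "k \<ge> 4" then show "is_longest_nyldon_proper_suffix (H (k - 2)) (H k)"
    using main[of k] by simp
next
  fix k :: nat assume "k \<ge> 4" then show "is_longest_nyldon_proper_suffix (H (k - 2) @ [a]) (H k @ [a])"
    using main[of k] by simp
qed

end
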